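(* Let $p$ be a prime and let $\Phi_p$ be the set of all $F$-pure thresholds $\operatorname{fpt}(R,f)$, where $R$ ranges over all $F$-pure rings of characteristic $p$ and $f$ ranges over all non-zero non-units of $R$. Then for every integer $e\ge 1$ and every $\beta\in[0,1]\cap \frac{1}{p^e}\mathbb{N}$, we have \[ \Phi_p \cap \left(\beta, \tfrac{p^e}{p^e-1}\beta\right)=\emptyset. \]
   Context: A ring $R$ of characteristic $p$ is $F$-pure if the inclusion $R \subseteq R^{1/p}$ splits as a map of $R$-modules; such a ring is reduced. Roots. $R^{1/p^e}$ is the ring of formal $p^e$-th roots $r^{1/p^e}$ of elements $r\in R$. Its operations are $r^{1/p^e}+s^{1/p^e}=(r+s)^{1/p^e}$ and $r^{1/p^e}s^{1/p^e}=(rs)^{1/p^e}$. It contains $R$ via $r\mapsto (r^{p^e})^{1/p^e}$. Powers of $f$. For $a \in\mathbb{N}$, $f^{a/p^e}:=(f^a)^{1/p^e}$. Splitting. For $t\in R^{1/p^e}$, the inclusion $R\cdot t\subseteq R^{1/p^e}$ splits if there is an $R$-linear $\theta:R^{1/p^e}\to R$ with $\theta(t)=1$. Pairs. For $\lambda\ge0$, the pair $(R,f^\lambda)$ is $F$-pure if $R\cdot f^{\lfloor (p^e-1)\lambda\rfloor/p^e}\subseteq R^{1/p^e}$ splits for all $e\geq1$. $F$-pure threshold. $\operatorname{fpt}(R,f)$ is the supremum of all $\lambda\ge0$ with $(R,f^\lambda)$ $F$-pure. *)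

theory Defs
  imports Complex_Main "HOL-Computational_Algebra.Primes"
begin

text \<open>We identify R^(1/p^e) with R itself: the formal root r^(1/p^e) corresponds to r.
  Addition and multiplication are then those of R, and the structure map
  R \<rightarrow> R^(1/p^e) is r \<mapsto> r^(p^e). So an R-linear map R^(1/p^e) \<rightarrow> R is an
  additive map theta : R \<rightarrow> R with theta (r^(p^e) * x) = r * theta x.\<close>

definition root_split :: "nat \<Rightarrow> nat \<Rightarrow> 'a::comm_ring_1 \<Rightarrow> bool" where
  "root_split p e t \<longleftrightarrow>
     (\<exists>\<theta>::'a \<Rightarrow> 'a. (\<forall>x y. \<theta> (x + y) = \<theta> x + \<theta> y)
                 \<and> (\<forall>r x. \<theta> (r ^ (p ^ e) * x) = r * \<theta> x)
                 \<and> \<theta> t = 1)"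

definition F_pure_ring :: "nat \<Rightarrow> 'a::comm_ring_1 itself \<Rightarrow> bool" where
  "F_pure_ring p R \<longleftrightarrow> root_split p 1 (1::'a)"

definition F_pure_pair :: "nat \<Rightarrow> 'a::comm_ring_1 \<Rightarrow> real \<Rightarrow> bool" where
  "F_pure_pair p f lam \<longleftrightarrow>
     (\<forall>e::nat. e \<ge> 1 \<longrightarrow> root_split p e (f ^ nat \<lfloor>(real p ^ e - 1) * lam\<rfloor>))"

definition fpt :: "nat \<Rightarrow> 'a::comm_ring_1 \<Rightarrow> real" where
  "fpt p f = Sup {lam. lam \<ge> 0 \<and> F_pure_pair p f lam}"

end

theory Submission
  imports Defs
begin

lemma frob1:
  assumes "CHAR('a::comm_ring_1) = p" "prime p"
  shows "((x::'a) + y) ^ p = x ^ p + y ^ p"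
proof -
  have "(x+y)^p = (\<Sum>k\<le>p. of_nat (p choose k) * x^k * y^(p-k))"
    by (rule binomial_ring)
  also have "\<dots> = (\<Sum>k\<in>{0,p}. of_nat (p choose k) * x^k * y^(p-k))"
  proof -
    have z: "\<forall>k\<in>{..p} - {0, p}. of_nat (p choose k) * x ^ k * y ^ (p - k) = 0"
    proof
      fix k assume k: "k \<in> {..p} - {0, p}"
      have "p dvd (p choose k)" using k assms(2)
        by (intro dvd_choose_prime) (auto simp: prime_gt_0_nat)
      hence "(of_nat (p choose k) :: 'a) = 0" using assms(1)
        by (simp add: of_nat_eq_0_iff_char_dvd)
      thus "of_nat (p choose k) * x ^ k * y ^ (p - k) = 0" by simp
    qed
    show ?thesis by (rule sum.mono_neutral_right) (use z in auto)
  qed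
  also have "\<dots> = x^p + y^p" using assms(2) by (auto simp: prime_gt_0_nat)
  finally show ?thesis .
qed

lemma frob:
  assumes "CHAR('a::comm_ring_1) = p" "prime p"
  shows "((x::'a) + y) ^ (p^d) = x ^ (p^d) + y ^ (p^d)"
proof (induction d)
  case (Suc d)
  have "(x+y)^(p^Suc d) = ((x+y)^(p^d))^p" by (metis power_Suc power_mult mult.commute)
  also have "\<dots> = (x^(p^d))^p + (y^(p^d))^p" using Suc frob1[OF assms] by simp
  also have "\<dots> = x^(p^Suc d) + y^(p^Suc d)" by (metis power_Suc power_mult mult.commute)
  finally show ?case .
qed simp

lemma lower:
  assumes "CHAR('a::comm_ring_1) = p" "prime p"
    and "root_split p E ((f::'a) ^ a)" "E' \<le> E" "p^(E-E') * a' \<le> a"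
  shows "root_split p E' (f ^ a')"
proof -
  obtain \<theta> :: "'a \<Rightarrow> 'a" where add: "\<forall>x y. \<theta> (x + y) = \<theta> x + \<theta> y"
    and lin: "\<forall>r x. \<theta> (r ^ (p ^ E) * x) = r * \<theta> x" and one: "\<theta> (f^a) = 1"
    using assms(3) unfolding root_split_def by blast
  define d where "d = E - E'"
  define u where "u = f ^ (a - p^d * a')"
  have E: "p^E = p^E' * p^d" using assms(4) by (simp add: d_def power_add[symmetric])
  define \<psi> where "\<psi> x = \<theta> (x^(p^d) * u)" for x
  have "\<forall>x y. \<psi> (x + y) = \<psi> x + \<psi> y"
    by (simp add: \<psi>_def frob[OF assms(1,2)] distrib_right add)
  moreover have "\<forall>r x. \<psi> (r ^ (p ^ E') * x) = r * \<psi> x"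
  proof (intro allI)
    fix r x
    have "(r ^ (p ^ E') * x)^(p^d) * u = r^(p^E) * (x^(p^d) * u)"
      by (simp add: E power_mult_distrib power_mult)
    thus "\<psi> (r ^ (p ^ E') * x) = r * \<psi> x" by (simp add: \<psi>_def lin)
  qed
  moreover have "(f^a')^(p^d) * u = f^a"
    using assms(5) by (simp add: u_def d_def power_mult[symmetric] power_add[symmetric] mult.commute)
  hence "\<psi> (f^a') = 1" by (simp add: \<psi>_def one)
  ultimately show ?thesis unfolding root_split_def by blast
qed

lemma iter:
  assumes "root_split p e ((f::'a::comm_ring_1) ^ n)"
  shows "root_split p (k*e) (f ^ (n * (\<Sum>i<k. (p^e)^i)))"
proof -
  obtain \<theta> :: "'a \<Rightarrow> 'a" where add: "\<forall>x y. \<theta> (x + y) = \<theta> x + \<theta> y"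
    and lin: "\<forall>r x. \<theta> (r ^ (p ^ e) * x) = r * \<theta> x" and one: "\<theta> (f^n) = 1"
    using assms unfolding root_split_def by blast
  show ?thesis
  proof (induction k)
    case 0 show ?case unfolding root_split_def by (rule exI[of _ id]) simp
  next
    case (Suc k)
    then obtain T :: "'a \<Rightarrow> 'a" where tadd: "\<forall>x y. T (x + y) = T x + T y"
      and tlin: "\<forall>r x. T (r ^ (p ^ (k*e)) * x) = r * T x"
      and tone: "T (f ^ (n * (\<Sum>i<k. (p^e)^i))) = 1"
      unfolding root_split_def by blast
    define s where "s = (\<Sum>i<k. (p^e)^i)"
    have s': "(\<Sum>i<Suc k. (p^e)^i) = 1 + p^e * s"
      unfolding s_def by (subst sum.lessThan_Suc_shift) (simp add: sum_distrib_left)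
    have "\<forall>x y. T (\<theta> (x + y)) = T (\<theta> x) + T (\<theta> y)" by (simp add: add tadd)
    moreover have "\<forall>r x. T (\<theta> (r ^ (p ^ (Suc k*e)) * x)) = r * T (\<theta> x)"
    proof (intro allI)
      fix r x :: 'a
      have pe: "p ^ (Suc k*e) = p^(k*e) * p^e" by (simp add: power_add[symmetric] add.commute)
      have "r ^ (p ^ (Suc k*e)) = (r^(p^(k*e)))^(p^e)"
        unfolding pe by (rule power_mult)
      thus "T (\<theta> (r ^ (p ^ (Suc k*e)) * x)) = r * T (\<theta> x)" by (simp add: lin tlin)
    qed
    moreover have "f ^ (n * (1 + p^e * s)) = (f^(n*s))^(p^e) * f^n"
      by (simp add: algebra_simps power_add power_mult[symmetric])
    hence "T (\<theta> (f ^ (n * (\<Sum>i<Suc k. (p^e)^i)))) = 1"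
      using s' by (simp add: lin one tone[folded s_def])
    ultimately show ?case unfolding root_split_def by (intro exI[of _ "\<lambda>x. T (\<theta> x)"]) blast
  qed
qed

lemma split_unit:
  assumes "root_split p E ((f::'a::comm_ring_1) ^ a)" "p^E \<le> a"
  shows "f dvd 1"
proof -
  obtain \<theta> :: "'a \<Rightarrow> 'a" where
    lin: "\<forall>r x. \<theta> (r ^ (p ^ E) * x) = r * \<theta> x" and one: "\<theta> (f^a) = 1"
    using assms(1) unfolding root_split_def by blast
  have "f^a = f^(p^E) * f^(a - p^E)" using assms(2) by (simp flip: power_add)
  hence "1 = f * \<theta> (f^(a - p^E))" using one lin by simp
  thus ?thesis by (rule dvdI)
qed

theorem mainTheorem2:
  fixes p e :: nat and \<beta> :: real and f :: "'a::comm_ring_1"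
  assumes "prime p"
    and "CHAR('a) = p"
    and "F_pure_ring p TYPE('a)"
    and "f \<noteq> 0" and "\<not> f dvd 1"
    and "e \<ge> 1"
    and "0 \<le> \<beta>" and "\<beta> \<le> 1" and "\<exists>n::nat. \<beta> = real n / real p ^ e"
  shows "\<not> (\<beta> < fpt p f \<and> fpt p f < (real p ^ e / (real p ^ e - 1)) * \<beta>)"
proof
  assume H: "\<beta> < fpt p f \<and> fpt p f < (real p ^ e / (real p ^ e - 1)) * \<beta>"
  define S where "S = {lam. lam \<ge> 0 \<and> F_pure_pair p f lam}"
  have fpt: "fpt p f = Sup S" unfolding S_def fpt_def by simp
  have p2: "p \<ge> 2" using assms(1) prime_ge_2_nat by blast
  obtain n :: nat where n: "\<beta> = real n / real p ^ e" using assms(9) by blast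
  define q where "q = p^e"
  have q2: "q \<ge> 2" unfolding q_def using power_increasing[of 1 e p] p2 assms(6) by simp
  have rq: "real q = real p ^ e" unfolding q_def by simp
  have one1: "root_split p 1 (1::'a)" using assms(3) unfolding F_pure_ring_def .
  have "root_split p k (1::'a)" for k
    using iter[of p 1 "1::'a" 0 k] one1 by simp
  hence "0 \<in> S" unfolding S_def F_pure_pair_def by simp
  hence ne: "S \<noteq> {}" by blast
  have lt2: "lam < 2" if "lam \<in> S" for lam
  proof (rule ccontr)
    assume "\<not> lam < 2"
    hence l2: "lam \<ge> 2" by simp
    have rs: "root_split p 1 (f ^ nat \<lfloor>(real p ^ 1 - 1) * lam\<rfloor>)"
      using that unfolding S_def F_pure_pair_def by auto
    have "(real p - 1) * lam \<ge> (real p - 1) * 2" using l2 p2 by (intro mult_left_mono) auto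
    moreover have "(real p - 1) * 2 \<ge> real p" using p2 by simp
    ultimately have "real p \<le> (real p ^ 1 - 1) * lam" by simp
    hence "p^1 \<le> nat \<lfloor>(real p ^ 1 - 1) * lam\<rfloor>"
      by (simp add: le_nat_floor)
    from split_unit[OF rs this] assms(5) show False by simp
  qed
  have bdd: "bdd_above S" using lt2 by (intro bdd_aboveI[of _ 2]) (auto intro: less_imp_le)
  obtain l0 where l0S: "l0 \<in> S" and l0: "\<beta> < l0"
    using H fpt less_cSup_iff[OF ne bdd] by auto
  define \<delta> where "\<delta> = l0 - \<beta>"
  have dpos: "\<delta> > 0" using l0 unfolding \<delta>_def by simp
  obtain k0 :: nat where k0: "l0 / \<delta> < real k0" using reals_Archimedean2 by blast
  define k where "k = Suc k0"
  have "real k \<le> real q ^ k"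
  proof -
    have "k < 2^k" by (rule less_exp)
    hence "real k \<le> 2^k" by (metis less_imp_le of_nat_le_iff of_nat_numeral of_nat_power)
    also have "(2::real)^k \<le> real q ^ k" using q2 by (intro power_mono) auto
    finally show ?thesis .
  qed
  hence "l0 < real q ^ k * \<delta>"
  proof -
    assume a: "real k \<le> real q ^ k"
    have "l0 < real k0 * \<delta>" using k0 dpos by (simp add: pos_divide_less_eq)
    also have "\<dots> \<le> real k * \<delta>" using dpos unfolding k_def by simp
    also have "\<dots> \<le> real q ^ k * \<delta>" using a dpos by (intro mult_right_mono) auto
    finally show ?thesis .
  qed
  hence key: "real q ^ (k-1) * real n \<le> (real q ^ k - 1) * l0"
  proof -
    assume a: "l0 < real q ^ k * \<delta>"
    have qk: "real q ^ k = real q * real q ^ (k-1)" unfolding k_def by simp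
    have qb: "real q * \<beta> = real n" using n rq q2 p2 by simp
    have "real q ^ k * \<beta> = real q ^ (k-1) * (real q * \<beta>)" by (simp add: qk)
    hence "real q ^ (k-1) * real n = real q ^ k * \<beta>" using qb by simp
    thus ?thesis using a unfolding \<delta>_def by (simp add: algebra_simps)
  qed
  have rsk: "root_split p (k*e) (f ^ nat \<lfloor>(real p ^ (k*e) - 1) * l0\<rfloor>)"
    using l0S unfolding S_def F_pure_pair_def using assms(6) k_def by auto
  have "p^(k*e - e) * n \<le> nat \<lfloor>(real p ^ (k*e) - 1) * l0\<rfloor>"
  proof -
    have "k*e - e = (k-1)*e" by (simp add: diff_mult_distrib)
    moreover have "(real p ^ (k-1)) ^ e = (real p ^ e) ^ (k-1)"
      by (metis power_mult mult.commute)
    ultimately have e1: "real (p^(k*e - e) * n) = real q ^ (k-1) * real n"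
      by (simp add: q_def power_mult)
    have e2: "real p ^ (k*e) = real q ^ k" by (simp add: rq power_mult mult.commute)
    have "real (p^(k*e - e) * n) \<le> (real p ^ (k*e) - 1) * l0" unfolding e1 e2 by (rule key)
    thus ?thesis by (rule le_nat_floor)
  qed
  hence fn: "root_split p e (f ^ n)"
    using lower[OF assms(2,1) rsk] k_def by simp
  define \<mu> where "\<mu> = real n / (real q - 1)"
  have mu_eq: "(real p ^ e / (real p ^ e - 1)) * \<beta> = \<mu>"
    using n rq q2 p2 unfolding \<mu>_def by (simp add: field_simps)
  have mu0: "\<mu> \<ge> 0" using q2 unfolding \<mu>_def by simp
  have "F_pure_pair p f \<mu>"
    unfolding F_pure_pair_def
  proof (intro allI impI)
    fix e' :: nat assume e': "e' \<ge> 1"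
    define s where "s = (\<Sum>i<e'. q^i)"
    have rs: "root_split p (e'*e) (f ^ (n * s))"
      using iter[OF fn, of e'] unfolding s_def q_def .
    have geo: "real s * (real q - 1) = real q ^ e' - 1"
      unfolding s_def by (induction e') (simp_all add: algebra_simps)
    have ns: "real (n * s) = (real q ^ e' - 1) * \<mu>"
    proof -
      have qm: "real q - 1 > 0" using q2 by simp
      have "(real q ^ e' - 1) * \<mu> = real n * (real s * (real q - 1)) / (real q - 1)"
        unfolding \<mu>_def geo by simp
      also have "\<dots> = real n * real s" using qm by simp
      finally show ?thesis by simp
    qed
    have "e'*e \<ge> e'" using assms(6) by simp
    define d where "d = e'*e - e'"
    have pd: "real p ^ d * real p ^ e' = real q ^ e'"
      using \<open>e'*e \<ge> e'\<close> unfolding d_def q_def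
      by (simp add: power_add[symmetric] power_mult mult.commute)
    have pd1: "real p ^ d \<ge> 1" using p2 by simp
    have fl: "real (nat \<lfloor>(real p ^ e' - 1) * \<mu>\<rfloor>) \<le> (real p ^ e' - 1) * \<mu>"
      using mu0 p2 by (simp add: mult_nonneg_nonneg)
    have "real (p^d * nat \<lfloor>(real p ^ e' - 1) * \<mu>\<rfloor>) \<le> real p ^ d * ((real p ^ e' - 1) * \<mu>)"
      using fl by (simp add: mult_left_mono)
    also have "\<dots> = (real q ^ e' - real p ^ d) * \<mu>" using pd by (simp add: algebra_simps)
    also have "\<dots> \<le> (real q ^ e' - 1) * \<mu>" using pd1 mu0 by (intro mult_right_mono) auto
    finally have "p^d * nat \<lfloor>(real p ^ e' - 1) * \<mu>\<rfloor> \<le> n * s" using ns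
      by (metis of_nat_le_iff)
    thus "root_split p e' (f ^ nat \<lfloor>(real p ^ e' - 1) * \<mu>\<rfloor>)"
      using lower[OF assms(2,1) rs \<open>e'*e \<ge> e'\<close>] unfolding d_def by simp
  qed
  hence "\<mu> \<in> S" using mu0 unfolding S_def by simp
  hence "\<mu> \<le> Sup S" using bdd by (rule cSup_upper)
  thus False using H fpt mu_eq by simp
qed

end
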